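(* Let $m$ and $k$ be odd integers with $k\ge3$ and $m\ge 2k+3$. Then $\mathrm{msum}(mk,k)\ge2$.
   Context: For positive integers $n>k$, let $S_n$ be the set of permutations $\pi=(\pi_1,\dots,\pi_n)$ of $1,\dots,n$, with cyclic indexing $\pi_{n+i}=\pi_i$, and $s_i=\sum_{j=0}^{k-1}\pi_{i+j}$ for $i=1,\dots,n$. Define $\mathrm{msum}(\pi,k)=\max_{1\le i\le n}s_i-\frac{k(n+1)}{2}$ and $\mathrm{msum}(n,k)=\min_{\pi\in S_n}\mathrm{msum}(\pi,k)$. *)

theory Defs
  imports Main "HOL-Combinatorics.Multiset_Permutations"
begin

(* A permutation pi = (pi_1,...,pi_n) of 1..n is a list xs with xs ! (i-1) = pi_i.
   Cyclic window sum s_i = sum_{j=0}^{k-1} pi_{i+j}, with i = i0+1, i0 in {0..<n}. *)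
definition window_sum :: "nat list \<Rightarrow> nat \<Rightarrow> nat \<Rightarrow> nat" where
  "window_sum xs k i0 = (\<Sum>j<k. xs ! ((i0 + j) mod length xs))"

definition msum_perm :: "nat list \<Rightarrow> nat \<Rightarrow> real" where
  "msum_perm xs k =
     real (Max {window_sum xs k i0 | i0. i0 < length xs})
     - real k * (real (length xs) + 1) / 2"

definition msum :: "nat \<Rightarrow> nat \<Rightarrow> real" where
  "msum n k = Min ((\<lambda>xs. msum_perm xs k) ` permutations_of_set {1..n})"

end

theory Submission
  imports Defs
begin


lemma ivt_step:
  fixes y :: "nat \<Rightarrow> int"
  assumes "y a \<le> v" "v < y (a + t)"
  shows "\<exists>s<t. y (a + s) \<le> v \<and> v < y (Suc (a + s))"
  using assms(2)
proof (induction t)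
  case 0 then show ?case using assms(1) by simp
next
  case (Suc t)
  show ?case
  proof (cases "v < y (a + t)")
    case True
    then obtain s where "s < t" "y (a + s) \<le> v" "v < y (Suc (a + s))" using Suc.IH by blast
    then show ?thesis by (intro exI[of _ s]) auto
  next
    case False
    then show ?thesis using Suc.prems by (intro exI[of _ t]) auto
  qed
qed

lemma per_mult:
  fixes y :: "nat \<Rightarrow> 'a"
  assumes per: "\<And>j. y (j + m) = y j"
  shows "y (i + c * m) = y i"
proof (induction c)
  case 0 then show ?case by simp
next
  case (Suc c)
  have "y (i + Suc c * m) = y ((i + c * m) + m)" by (simp add: algebra_simps)
  also have "\<dots> = y (i + c * m)" by (rule per)
  finally show ?case using Suc by simp
qed

lemma per_mod:
  fixes y :: "nat \<Rightarrow> 'a"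
  assumes per: "\<And>j. y (j + m) = y j"
  shows "y j = y (j mod m)"
proof -
  have "y (j mod m + (j div m) * m) = y (j mod m)" by (rule per_mult[of y m, OF per])
  then show ?thesis by simp
qed

lemma mod_neq_small:
  fixes a b m :: nat
  assumes "a < b" "b < a + m"
  shows "b mod m \<noteq> a mod m"
proof
  assume "b mod m = a mod m"
  then have "m dvd b - a" using mod_eq_dvd_iff_nat[of a b m] assms by simp
  moreover have "0 < b - a" "b - a < m" using assms by auto
  ultimately show False by (meson nat_dvd_not_less)
qed

lemma sum_ind_card:
  fixes n :: nat
  shows "(\<Sum>q<n. if P q then 1 else (0::nat)) = card {q. q < n \<and> P q}"
proof (induction n)
  case 0 then show ?case by simp
next
  case (Suc n)
  have eq: "{q. q < Suc n \<and> P q} = {q. q < n \<and> P q} \<union> (if P n then {n} else {})" by (auto simp: less_Suc_eq)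
  show ?case using Suc by (simp add: eq card_Un_disjoint)
qed



lemma half_bound:
  fixes y :: "nat \<Rightarrow> int" and m :: nat
  assumes per: "\<And>j. y (j + m) = y j" and inj: "inj_on y {..<m}" and m2: "m \<ge> 2"
  shows "2 * (int m - 1) + 2 * (int (card {q. q < m \<and> y q < y (Suc q) \<and> y (Suc (Suc q)) < y (Suc q)}) - 1)
          \<le> (\<Sum>j<m. \<bar>y (Suc j) - y j\<bar>)"
proof -
  have pm: "y j = y (j mod m)" for j by (rule per_mod[of y m, OF per])
  define Y where "Y = y ` {..<m}"
  have finY: "finite Y" and neY: "Y \<noteq> {}" using m2 by (auto simp: Y_def lessThan_empty_iff)
  define L where "L = Min Y"
  define H where "H = Max Y"
  have inY: "y j \<in> Y" for j
  proof -
    have "j mod m < m" using m2 by simp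
    then show ?thesis unfolding Y_def using pm[of j] by auto
  qed
  have LH: "L \<le> y j" "y j \<le> H" for j using inY[of j] finY by (auto simp: L_def H_def)
  obtain a where a: "a < m" "y a = L" using Min_in[OF finY neY] unfolding L_def Y_def by auto
  obtain g where g: "g < m" "y g = H" using Max_in[OF finY neY] unfolding H_def Y_def by auto
  have span: "int m - 1 \<le> H - L"
  proof -
    have "card Y = m" unfolding Y_def using card_image[OF inj] by simp
    moreover have "Y \<subseteq> {L..H}" using LH inY unfolding Y_def by auto
    then have "card Y \<le> card {L..H}" by (intro card_mono) auto
    ultimately show ?thesis using m2 by (cases "H - L + 1 \<ge> 0") (auto simp: le_nat_iff)
  qed
  have tele: "(\<Sum>j<m. y (Suc j) - y j) = 0"
    using sum_lessThan_telescope[of y m] per[of 0] by simp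
  have absid: "(\<Sum>j<m. \<bar>y (Suc j) - y j\<bar>) = 2 * (\<Sum>j<m. max (y (Suc j) - y j) 0)"
  proof -
    have "(\<Sum>j<m. \<bar>y (Suc j) - y j\<bar>) = (\<Sum>j<m. 2 * max (y (Suc j) - y j) 0 - (y (Suc j) - y j))"
      by (intro sum.cong refl) (simp add: abs_if max_def)
    also have "\<dots> = 2 * (\<Sum>j<m. max (y (Suc j) - y j) 0) - (\<Sum>j<m. y (Suc j) - y j)"
      by (simp add: sum_subtractf sum_distrib_left)
    finally show ?thesis using tele by simp
  qed
  define U where "U v = card {j. j < m \<and> y j \<le> v \<and> v < y (Suc j)}" for v
  have posid: "max (y (Suc j) - y j) 0 = (\<Sum>v\<in>{L..<H}. if y j \<le> v \<and> v < y (Suc j) then 1 else 0)" for j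
  proof -
    have "(\<Sum>v\<in>{L..<H}. if y j \<le> v \<and> v < y (Suc j) then 1 else (0::int))
          = int (card ({L..<H} \<inter> {v. y j \<le> v \<and> v < y (Suc j)}))"
      by (simp add: sum.If_cases)
    also have "{L..<H} \<inter> {v. y j \<le> v \<and> v < y (Suc j)} = {y j..<y (Suc j)}"
      using LH[of j] LH[of "Suc j"] by auto
    finally show ?thesis by simp
  qed
  have Uid: "(\<Sum>j<m. if y j \<le> v \<and> v < y (Suc j) then 1 else (0::int)) = int (U v)" for v
  proof -
    have "(\<Sum>j<m. if y j \<le> v \<and> v < y (Suc j) then 1 else (0::int))
       = int (\<Sum>j<m. if y j \<le> v \<and> v < y (Suc j) then 1 else (0::nat))"
      unfolding of_nat_sum by (intro sum.cong refl) simp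
    then show ?thesis unfolding U_def sum_ind_card by simp
  qed
  have swap: "(\<Sum>j<m. max (y (Suc j) - y j) 0) = (\<Sum>v\<in>{L..<H}. int (U v))"
    unfolding posid Uid[symmetric] by (rule sum.swap)
  have finU: "finite {j. j < m \<and> y j \<le> v \<and> v < y (Suc j)}" for v by auto
  have ysuc: "y (Suc (j mod m)) = y (Suc j)" for j
    using pm[of "Suc (j mod m)"] pm[of "Suc j"] by (simp add: mod_Suc_eq)
  have U1: "U v \<ge> 1" if v: "L \<le> v" "v < H" for v
  proof -
    have "v < y (a + (g + m - a))" using g a v per[of g] by simp
    then obtain s where s: "y (a + s) \<le> v" "v < y (Suc (a + s))"
      using ivt_step[of y a v] a v by blast
    have "(a + s) mod m \<in> {j. j < m \<and> y j \<le> v \<and> v < y (Suc j)}"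
      using s m2 pm[of "a+s"] ysuc[of "a+s"] by auto
    then have "{j. j < m \<and> y j \<le> v \<and> v < y (Suc j)} \<noteq> {}" by blast
    then show ?thesis unfolding U_def using finU[of v] by (simp add: Suc_le_eq card_gt_0_iff)
  qed
  define Mx where "Mx = {q. q < m \<and> y q < y (Suc q) \<and> y (Suc (Suc q)) < y (Suc q)}"
  define Q' where "Q' = {q. q \<in> Mx \<and> y (Suc q) < H}"
  define Q where "Q = (\<lambda>q. y (Suc q) - 1) ` Q'"
  have injS: "inj_on (\<lambda>q. y (Suc q)) {..<m}"
  proof (rule inj_onI)
    fix q q' assume q: "q \<in> {..<m}" "q' \<in> {..<m}" "y (Suc q) = y (Suc q')"
    have "y (Suc q mod m) = y (Suc q' mod m)" using q(3) pm[of "Suc q"] pm[of "Suc q'"] by simp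
    then have "Suc q mod m = Suc q' mod m" using inj m2 by (auto dest: inj_onD)
    then show "q = q'" using q(1,2) by (simp add: mod_Suc split: if_splits)
  qed
  have U2: "U v \<ge> 2" if v: "v \<in> Q" for v
  proof -
    obtain q where q: "q < m" "y q < y (Suc q)" "y (Suc (Suc q)) < y (Suc q)" "y (Suc q) < H"
       and vq: "v = y (Suc q) - 1"
      using v unfolding Q_def Q'_def Mx_def by auto
    have gne1: "g \<noteq> Suc q" using g q by auto
    have gne2: "g + m \<noteq> Suc q" using g q per[of g] by auto
    obtain t where t: "t \<le> m - 2" "y (Suc (Suc q) + t) = H"
    proof (cases "Suc (Suc q) \<le> g")
      case True
      have eq: "Suc (Suc q) + (g - Suc (Suc q)) = g" using True by simp
      show ?thesis
      proof (rule that[of "g - Suc (Suc q)"])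
        show "g - Suc (Suc q) \<le> m - 2" using g by simp
        show "y (Suc (Suc q) + (g - Suc (Suc q))) = H" by (subst eq) (rule g(2))
      qed
    next
      case False
      then have g1: "g \<le> q" using gne1 by auto
      moreover have g2: "Suc (Suc q) \<le> g + m" using gne2 q by auto
      have eq: "Suc (Suc q) + (g + m - Suc (Suc q)) = g + m" using g2 by simp
      show ?thesis
      proof (rule that[of "g + m - Suc (Suc q)"])
        show "g + m - Suc (Suc q) \<le> m - 2" using g1 by simp
        show "y (Suc (Suc q) + (g + m - Suc (Suc q))) = H" by (subst eq) (simp add: per g(2))
      qed
    qed
    have "v < y (Suc (Suc q) + t)" using t q vq by simp
    then obtain s where s: "s < t" "y (Suc (Suc q) + s) \<le> v" "v < y (Suc (Suc (Suc q) + s))"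
      using ivt_step[of y "Suc (Suc q)" v t] q vq by auto
    define j2 where "j2 = (Suc (Suc q) + s) mod m"
    have j2in: "j2 \<in> {j. j < m \<and> y j \<le> v \<and> v < y (Suc j)}"
      using s m2 pm[of "Suc (Suc q) + s"] ysuc[of "Suc (Suc q) + s"] unfolding j2_def by auto
    have j1in: "q \<in> {j. j < m \<and> y j \<le> v \<and> v < y (Suc j)}" using q vq by auto
    have "j2 \<noteq> q mod m" unfolding j2_def using s t m2 by (intro mod_neq_small) auto
    then have ne: "j2 \<noteq> q" using q by simp
    have "card {j2, q} \<le> U v" unfolding U_def using j1in j2in finU[of v] by (intro card_mono) auto
    then show ?thesis using ne by simp
  qed
  have QLH: "Q \<subseteq> {L..<H}"
  proof
    fix v assume "v \<in> Q"
    then obtain q where "q \<in> Mx" "y (Suc q) < H" "v = y (Suc q) - 1" unfolding Q_def Q'_def by auto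
    then show "v \<in> {L..<H}" using LH[of q] unfolding Mx_def by auto
  qed
  have Q'sub: "Q' \<subseteq> {..<m}" unfolding Q'_def Mx_def by auto
  have cardQ: "card Q = card Q'"
  proof -
    have "inj_on (\<lambda>q. y (Suc q) - 1) Q'"
      using inj_on_subset[OF injS Q'sub] by (auto simp: inj_on_def)
    then show ?thesis unfolding Q_def by (rule card_image)
  qed
  have finMx: "finite Mx" unfolding Mx_def by auto
  have cardMx: "card Mx \<le> card Q' + 1"
  proof -
    have "card (Mx - Q') \<le> Suc 0"
    proof (subst card_le_Suc0_iff_eq)
      show "finite (Mx - Q')" using finMx by auto
      show "\<forall>a1\<in>Mx - Q'. \<forall>a2\<in>Mx - Q'. a1 = a2"
      proof (intro ballI)
        fix a1 a2 assume a12: "a1 \<in> Mx - Q'" "a2 \<in> Mx - Q'"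
        then have "y (Suc a1) = H" "y (Suc a2) = H" "a1 < m" "a2 < m"
          using LH unfolding Q'_def Mx_def by (auto simp: order.order_iff_strict)
        then show "a1 = a2" using injS by (auto dest: inj_onD)
      qed
    qed
    moreover have "Mx \<subseteq> Q' \<union> (Mx - Q')" by auto
    then have "card Mx \<le> card (Q' \<union> (Mx - Q'))"
      using finMx Q'sub by (intro card_mono) (auto intro: finite_subset)
    then have "card Mx \<le> card Q' + card (Mx - Q')"
      using card_Un_le[of Q' "Mx - Q'"] by linarith
    ultimately show ?thesis by simp
  qed
  have finLH: "finite {L..<H}" by simp
  have "(\<Sum>v\<in>{L..<H}. 1 + (if v \<in> Q then 1 else 0)) \<le> (\<Sum>v\<in>{L..<H}. int (U v))"
  proof (rule sum_mono)
    fix v assume "v \<in> {L..<H}"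
    then show "1 + (if v \<in> Q then 1 else 0) \<le> int (U v)" using U1[of v] U2[of v] by auto
  qed
  moreover have "(\<Sum>v\<in>{L..<H}. 1 + (if v \<in> Q then 1 else (0::int))) = (H - L) + int (card Q)"
  proof -
    have "(\<Sum>v\<in>{L..<H}. (if v \<in> Q then 1 else (0::int))) = int (card ({L..<H} \<inter> Q))"
      by (simp add: sum.If_cases)
    also have "{L..<H} \<inter> Q = Q" using QLH by auto
    finally have "(\<Sum>v\<in>{L..<H}. (if v \<in> Q then 1 else (0::int))) = int (card Q)" .
    moreover have "(\<Sum>v\<in>{L..<H}. (1::int)) = H - L" using span m2 by simp
    ultimately show ?thesis by (simp add: sum.distrib)
  qed
  ultimately have "(H - L) + int (card Q) \<le> (\<Sum>j<m. max (y (Suc j) - y j) 0)" using swap by simp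
  moreover have "int (card Mx) \<le> int (card Q') + 1" using cardMx by linarith
  moreover have "int (card Q) = int (card Q')" using cardQ by simp
  ultimately have "2 * (int m - 1) + 2 * (int (card Mx) - 1) \<le> (\<Sum>j<m. \<bar>y (Suc j) - y j\<bar>)"
  proof -
    assume A1: "H - L + int (card Q) \<le> (\<Sum>j<m. max (y (Suc j) - y j) 0)"
      and A2: "int (card Mx) \<le> int (card Q') + 1" and A3: "int (card Q) = int (card Q')"
    have "2 * (H - L + int (card Q)) \<le> (\<Sum>j<m. \<bar>y (Suc j) - y j\<bar>)"
      unfolding absid using A1 by simp
    then show ?thesis using A2 A3 span by (smt (verit))
  qed
  then show ?thesis unfolding Mx_def .
qed

lemma class_bound:
  fixes y :: "nat \<Rightarrow> int" and m :: nat
  assumes per: "\<And>j. y (j + m) = y j" and inj: "inj_on y {..<m}" and m2: "m \<ge> 2"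
  shows "2 * int m - 4 + int (card {q. q < m \<and> (y (Suc q) - y q) * (y (Suc (Suc q)) - y (Suc q)) < 0})
          \<le> (\<Sum>j<m. \<bar>y (Suc j) - y j\<bar>)"
proof -
  define Mx where "Mx = {q. q < m \<and> y q < y (Suc q) \<and> y (Suc (Suc q)) < y (Suc q)}"
  define Mn where "Mn = {q. q < m \<and> - y q < - y (Suc q) \<and> - y (Suc (Suc q)) < - y (Suc q)}"
  have h1: "2 * (int m - 1) + 2 * (int (card Mx) - 1) \<le> (\<Sum>j<m. \<bar>y (Suc j) - y j\<bar>)"
    unfolding Mx_def by (rule half_bound[OF per inj m2])
  have per': "\<And>j. - y (j + m) = - y j" using per by simp
  have inj': "inj_on (\<lambda>j. - y j) {..<m}" using inj by (auto simp: inj_on_def)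
  have h2: "2 * (int m - 1) + 2 * (int (card Mn) - 1) \<le> (\<Sum>j<m. \<bar>- y (Suc j) - - y j\<bar>)"
    unfolding Mn_def by (rule half_bound[of "\<lambda>j. - y j", OF per' inj' m2])
  have h2': "(\<Sum>j<m. \<bar>- y (Suc j) - - y j\<bar>) = (\<Sum>j<m. \<bar>y (Suc j) - y j\<bar>)"
    by (intro sum.cong refl) simp
  have eq: "{q. q < m \<and> (y (Suc q) - y q) * (y (Suc (Suc q)) - y (Suc q)) < 0} = Mx \<union> Mn"
    unfolding Mx_def Mn_def by (auto simp: mult_less_0_iff)
  have disj: "Mx \<inter> Mn = {}" unfolding Mx_def Mn_def by auto
  have "card (Mx \<union> Mn) = card Mx + card Mn"
    by (rule card_Un_disjoint) (auto simp: Mx_def Mn_def disj)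
  then show ?thesis unfolding eq using h1 h2 h2' by (smt (verit) of_nat_add)
qed



lemma sum_shift_per:
  fixes f :: "nat \<Rightarrow> 'a::cancel_comm_monoid_add"
  assumes per: "\<And>i. f (i + n) = f i"
  shows "(\<Sum>i<n. f (i + t)) = (\<Sum>i<n. f i)"
proof (induction t)
  case 0 then show ?case by simp
next
  case (Suc t)
  define g where "g i = f (i + t)" for i
  have "(\<Sum>i<Suc n. g i) = g 0 + (\<Sum>i<n. g (Suc i))" by (rule sum.lessThan_Suc_shift)
  moreover have "(\<Sum>i<Suc n. g i) = (\<Sum>i<n. g i) + g n" by simp
  moreover have "g n = g 0" unfolding g_def using per[of t] by (simp add: add.commute)
  ultimately have "(\<Sum>i<n. g (Suc i)) = (\<Sum>i<n. g i)" by (simp add: add.commute)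
  then show ?case using Suc unfolding g_def by simp
qed

lemma sum_lessThan_add_nat:
  fixes f :: "nat \<Rightarrow> 'a::comm_monoid_add"
  shows "(\<Sum>q<a + b. f q) = (\<Sum>q<a. f q) + (\<Sum>r<b. f (r + a))"
  by (induction b) (simp_all add: add_ac)

lemma sum_group:
  fixes f :: "nat \<Rightarrow> 'a::comm_monoid_add"
  shows "(\<Sum>q<m*k. f q) = (\<Sum>j<m. \<Sum>r<k. f (r + j*k))"
proof (induction m)
  case 0 then show ?case by simp
next
  case (Suc m)
  have "(\<Sum>q<Suc m * k. f q) = (\<Sum>q<m*k + k. f q)" by (simp add: add.commute)
  also have "\<dots> = (\<Sum>q<m*k. f q) + (\<Sum>r<k. f (r + m*k))" by (rule sum_lessThan_add_nat)
  finally show ?case using Suc by simp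
qed

lemma card_group:
  fixes P :: "nat \<Rightarrow> bool"
  shows "(\<Sum>r<k. card {j. j < m \<and> P (r + j*k)}) = card {q. q < m*k \<and> P q}"
proof -
  have "card {q. q < m*k \<and> P q} = (\<Sum>q<m*k. if P q then 1 else 0)" by (simp add: sum_ind_card)
  also have "\<dots> = (\<Sum>j<m. \<Sum>r<k. if P (r + j*k) then 1 else 0)" by (rule sum_group)
  also have "\<dots> = (\<Sum>r<k. \<Sum>j<m. if P (r + j*k) then 1 else 0)" by (rule sum.swap)
  also have "\<dots> = (\<Sum>r<k. card {j. j < m \<and> P (r + j*k)})" by (simp add: sum_ind_card)
  finally show ?thesis by simp
qed



lemma main_exists:
  fixes xs :: "nat list" and m k :: nat
  assumes xs: "xs \<in> permutations_of_set {1..m*k}" and om: "odd m" and ok: "odd k"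
    and k3: "k \<ge> 3" and mk: "m \<ge> 2*k+3"
  shows "\<exists>i0 < m*k. k * (m*k+1) + 4 \<le> 2 * window_sum xs k i0"
proof (rule ccontr)
  assume "\<not> ?thesis"
  then have H: "2 * window_sum xs k i0 < k*(m*k+1) + 4" if "i0 < m*k" for i0 using that by auto
  define n where "n = m*k"
  have kn: "k < n" "0 < k" "2 \<le> m" using k3 mk unfolding n_def by auto
  have setxs: "set xs = {1..n}" and dist: "distinct xs"
    using permutations_of_setD[OF xs] unfolding n_def by auto
  have len: "length xs = n" using distinct_card[OF dist] setxs by simp
  define A where "A = k*(n+1) div 2"
  have oddn: "odd n" unfolding n_def using om ok by simp
  have A2: "2*A = k*(n+1)" unfolding A_def using oddn by simp
  have wsle: "window_sum xs k i0 \<le> A + 1" if "i0 < n" for i0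
    using H[of i0] that A2 unfolding n_def by simp
  define p where "p i = int (xs ! (i mod n))" for i
  define s where "s i = (\<Sum>j<k. p (i + j))" for i
  define d where "d i = int A + 1 - s i" for i
  have pper: "p (i + n) = p i" for i by (simp add: p_def)
  have s_ws: "s i = int (window_sum xs k (i mod n))" for i
  proof -
    have "window_sum xs k (i mod n) = (\<Sum>j<k. xs ! ((i + j) mod n))"
      unfolding window_sum_def len by (simp add: mod_add_left_eq)
    then show ?thesis unfolding s_def p_def by (simp add: of_nat_sum)
  qed
  have dnn: "d i \<ge> 0" for i
  proof -
    have "i mod n < n" using kn by simp
    then show ?thesis using wsle[of "i mod n"] s_ws[of i] unfolding d_def by simp
  qed
  have dper: "d (i + n) = d i" for i unfolding d_def s_ws by simp
  have step: "p (i + k) - p i = d i - d (Suc i)" for i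
  proof -
    have "(\<Sum>j<Suc k. p (i + j)) = p (i + 0) + (\<Sum>j<k. p (i + Suc j))" by (rule sum.lessThan_Suc_shift)
    moreover have "(\<Sum>j<Suc k. p (i + j)) = s i + p (i + k)" unfolding s_def by simp
    moreover have "s (Suc i) = (\<Sum>j<k. p (i + Suc j))" unfolding s_def by simp
    ultimately show ?thesis unfolding d_def by simp
  qed
  have pinj: "a mod n = b mod n" if "p a = p b" for a b
  proof -
    have "a mod n < length xs" "b mod n < length xs" using kn len by auto
    then show ?thesis using that nth_eq_iff_index_eq[OF dist] unfolding p_def by auto
  qed
  have nodz: "\<not> (d i = 0 \<and> d (Suc i) = 0)" for i
  proof
    assume "d i = 0 \<and> d (Suc i) = 0"
    then have "p (i + k) = p i" using step[of i] by simp
    then have "(i + k) mod n = i mod n" by (rule pinj)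
    then have "n dvd k" using mod_eq_dvd_iff_nat[of i "i + k" n] by simp
    then show False using kn by (meson nat_dvd_not_less)
  qed
  have sump: "2 * (\<Sum>i<n. p i) = int n * (int n + 1)"
  proof -
    have "(\<Sum>i<n. p i) = (\<Sum>i<n. int (xs ! i))" unfolding p_def by (intro sum.cong refl) simp
    also have "\<dots> = int (sum_list xs)" using len by (simp add: sum_list_sum_nth of_nat_sum atLeast0LessThan)
    also have "sum_list xs = \<Sum>{1..n}" using sum_list_distinct_conv_sum_set[OF dist, of "\<lambda>x. x"] setxs by simp
    also have "int (\<Sum>{1..n}) = (\<Sum>i = Suc 0..n. int i)" by (simp add: of_nat_sum)
    finally show ?thesis using double_gauss_sum_from_Suc_0[of n, where ?'a = int] by simp
  qed
  have sums: "(\<Sum>i<n. s i) = int k * (\<Sum>i<n. p i)"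
  proof -
    have "(\<Sum>i<n. s i) = (\<Sum>j<k. \<Sum>i<n. p (i + j))" unfolding s_def by (rule sum.swap)
    also have "\<dots> = (\<Sum>j<k. \<Sum>i<n. p i)" by (intro sum.cong refl sum_shift_per) (simp add: pper)
    finally show ?thesis by simp
  qed
  have sumd: "(\<Sum>i<n. d i) = int n"
  proof -
    have "(\<Sum>i<n. d i) = int n * (int A + 1) - (\<Sum>i<n. s i)" unfolding d_def by (simp add: sum_subtractf)
    then have "2 * (\<Sum>i<n. d i) = 2 * int n * (int A + 1) - int k * (2 * (\<Sum>i<n. p i))"
      using sums by (simp add: algebra_simps)
    also have "\<dots> = int n * (2 * int A) + 2 * int n - int n * (int k * (int n + 1))"
      unfolding sump by (simp add: algebra_simps)
    also have "2 * int A = int k * (int n + 1)" using A2 by (metis of_nat_1 of_nat_add of_nat_mult of_nat_numeral)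
    finally show ?thesis by simp
  qed
  define D where "D r = (\<Sum>j<m. d (r + j*k))" for r
  have Dsuc: "D (Suc r) = D r" for r
  proof -
    have "(\<Sum>j<m. p (r + Suc j * k) - p (r + j * k)) = p (r + m * k) - p (r + 0 * k)"
      by (rule sum_lessThan_telescope[of "\<lambda>j. p (r + j * k)"])
    also have "p (r + m * k) = p r" using pper[of r] unfolding n_def by simp
    finally have t0: "(\<Sum>j<m. p (r + Suc j * k) - p (r + j * k)) = 0" by simp
    have "(\<Sum>j<m. p (r + Suc j * k) - p (r + j * k)) = (\<Sum>j<m. d (r + j*k) - d (Suc r + j*k))"
    proof (intro sum.cong refl)
      fix j
      have "p (r + Suc j * k) = p ((r + j*k) + k)" by (simp add: algebra_simps)
      then show "p (r + Suc j * k) - p (r + j * k) = d (r + j*k) - d (Suc r + j*k)"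
        using step[of "r + j*k"] by simp
    qed
    then show ?thesis using t0 unfolding D_def by (simp add: sum_subtractf)
  qed
  have Dall: "D r = D 0" for r by (induction r) (simp_all add: Dsuc)
  have "(\<Sum>i<n. d i) = (\<Sum>j<m. \<Sum>r<k. d (r + j*k))" unfolding n_def by (rule sum_group)
  also have "\<dots> = (\<Sum>r<k. D r)" unfolding D_def by (rule sum.swap)
  also have "\<dots> = (\<Sum>r<k. D 0)" by (intro sum.cong refl) (rule Dall)
  also have "\<dots> = int k * D 0" by simp
  finally have "int k * D 0 = int n" using sumd by simp
  then have "int k * D 0 = int k * int m" using sumd unfolding n_def by (simp add: mult.commute)
  then have "D 0 = int m" using kn by simp
  then have Dm: "D r = int m" for r using Dall[of r] by simp
  define bad where "bad q = (d q > 0 \<and> d (Suc q) > 0)" for q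
  define turn where "turn q = ((p (q + k) - p q) * (p (q + k + k) - p (q + k)) < 0)" for q
  have clsb: "card {j. j < m \<and> turn (r + j*k)} + 2 * card {j. j < m \<and> bad (r + j*k)} \<le> 4"
    if r: "r < k" for r
  proof -
    define y where "y j = p (r + j*k)" for j
    have yper: "y (j + m) = y j" for j
    proof -
      have "r + (j + m) * k = (r + j*k) + n" unfolding n_def by (simp add: algebra_simps)
      then show ?thesis unfolding y_def using pper[of "r + j*k"] by (simp add: add.assoc)
    qed
    have yinj: "inj_on y {..<m}"
    proof (rule inj_onI)
      fix a b assume ab: "a \<in> {..<m}" "b \<in> {..<m}" "y a = y b"
      have lt: "r + j*k < n" if "j < m" for j
      proof -
        have "r + j*k < k + j*k" using r by simp
        also have "k + j*k = Suc j * k" by simp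
        also have "\<dots> \<le> m * k" using that by (intro mult_le_mono1) simp
        finally show ?thesis unfolding n_def .
      qed
      have "(r + a*k) mod n = (r + b*k) mod n" using ab(3) unfolding y_def by (rule pinj)
      then have "r + a*k = r + b*k" using lt[of a] lt[of b] ab by simp
      then show "a = b" using kn by simp
    qed
    note cb = class_bound[OF yper yinj kn(3)]
    have ys1: "y (Suc j) = p (r + j*k + k)" for j by (simp add: y_def algebra_simps)
    have ys2: "y (Suc (Suc j)) = p (r + j*k + k + k)" for j by (simp add: y_def algebra_simps)
    have seteq: "{q. q < m \<and> (y (Suc q) - y q) * (y (Suc (Suc q)) - y (Suc q)) < 0}
                 = {j. j < m \<and> turn (r + j*k)}"
      unfolding y_def turn_def by (simp add: algebra_simps)
    have up: "(\<Sum>j<m. \<bar>y (Suc j) - y j\<bar>)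
              \<le> (\<Sum>j<m. d (r + j*k) + d (Suc r + j*k) - 2 * (if bad (r + j*k) then 1 else 0))"
    proof (rule sum_mono)
      fix j
      have "y (Suc j) - y j = d (r + j*k) - d (Suc r + j*k)" using step[of "r + j*k"] ys1[of j]
        unfolding y_def by simp
      then show "\<bar>y (Suc j) - y j\<bar> \<le> d (r + j*k) + d (Suc r + j*k) - 2 * (if bad (r + j*k) then 1 else 0)"
        using dnn[of "r + j*k"] dnn[of "Suc r + j*k"] unfolding bad_def by auto
    qed
    have indsum: "(\<Sum>j<m. (if bad (r + j*k) then 1 else 0::int)) = int (card {j. j < m \<and> bad (r + j*k)})"
    proof -
      have "(\<Sum>j<m. (if bad (r + j*k) then 1 else 0::int)) = int (\<Sum>j<m. (if bad (r + j*k) then 1 else 0::nat))"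
        unfolding of_nat_sum by (intro sum.cong refl) simp
      then show ?thesis by (simp add: sum_ind_card)
    qed
    have "(\<Sum>j<m. d (r + j*k) + d (Suc r + j*k) - 2 * (if bad (r + j*k) then 1 else 0))
          = D r + D (Suc r) - 2 * int (card {j. j < m \<and> bad (r + j*k)})"
      unfolding D_def indsum[symmetric] by (simp add: sum.distrib sum_subtractf sum_distrib_left)
    then have "2 * int m - 4 + int (card {j. j < m \<and> turn (r + j*k)})
               \<le> 2 * int m - 2 * int (card {j. j < m \<and> bad (r + j*k)})"
      using cb up Dm[of r] Dm[of "Suc r"] unfolding seteq by linarith
    then show ?thesis by linarith
  qed
  have alt: "turn q" if nb: "\<forall>t\<le>k. \<not> bad (q + t)" for q
  proof -
    define z where "z i = (d i = 0)" for i
    have zz: "z (q + t) = (z q = even t)" if "t \<le> k" for t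
      using that
    proof (induction t)
      case 0 show ?case by simp
    next
      case (Suc t)
      then have IH: "z (q+t) = (z q = even t)" by simp
      have nbt: "\<not> bad (q+t)" using nb Suc.prems by simp
      have "z (q + Suc t) = (\<not> z (q+t))"
        using nodz[of "q+t"] nbt dnn[of "q+t"] dnn[of "Suc (q+t)"] unfolding z_def bad_def by auto
      then show ?case using IH by simp
    qed
    have zk: "z (q+k) = (\<not> z q)" using zz[of k] ok by simp
    have nb0: "\<not> bad q" and nbk: "\<not> bad (q+k)" using nb[rule_format, of 0] nb[rule_format, of k] by auto
    have s1: "p (q + k) - p q = d q - d (Suc q)" by (rule step)
    have s2: "p (q + k + k) - p (q + k) = d (q+k) - d (Suc (q+k))" by (rule step)
    show ?thesis
    proof (cases "z q")
      case True
      then have "d q = 0" "d (Suc q) > 0" using nodz[of q] dnn[of "Suc q"] unfolding z_def by auto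
      moreover have "d (q+k) > 0" "d (Suc (q+k)) = 0"
        using zk True nbk dnn[of "q+k"] dnn[of "Suc (q+k)"] unfolding z_def bad_def by auto
      ultimately show ?thesis unfolding turn_def s1 s2 by (simp add: mult_less_0_iff)
    next
      case False
      then have "d q > 0" "d (Suc q) = 0" using nb0 dnn[of q] dnn[of "Suc q"] unfolding z_def bad_def by auto
      moreover have "d (q+k) = 0" "d (Suc (q+k)) > 0"
        using zk False nodz[of "q+k"] dnn[of "Suc (q+k)"] unfolding z_def by auto
      ultimately show ?thesis unfolding turn_def s1 s2 by (simp add: mult_less_0_iff)
    qed
  qed
  have badper: "bad (i + n) = bad i" for i
    using dper[of i] dper[of "Suc i"] unfolding bad_def by simp
  have cnt: "card {q. q < n \<and> \<not> turn q} \<le> (k+1) * card {q. q < n \<and> bad q}"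
  proof -
    have "card {q. q < n \<and> \<not> turn q} = (\<Sum>q<n. if \<not> turn q then 1 else 0)" by (simp add: sum_ind_card)
    also have "\<dots> \<le> (\<Sum>q<n. \<Sum>t<Suc k. if bad (q + t) then 1 else 0)"
    proof (rule sum_mono)
      fix q
      show "(if \<not> turn q then 1 else 0) \<le> (\<Sum>t<Suc k. if bad (q + t) then 1 else (0::nat))"
      proof (cases "turn q")
        case True then show ?thesis by simp
      next
        case False
        then obtain t where t: "t \<le> k" "bad (q + t)" using alt[of q] by blast
        have "(if bad (q + t) then 1 else (0::nat)) \<le> (\<Sum>t<Suc k. if bad (q + t) then 1 else (0::nat))"
          by (rule member_le_sum) (use t in auto)
        then show ?thesis using t False by simp
      qed
    qed
    also have "\<dots> = (\<Sum>t<Suc k. \<Sum>q<n. if bad (q + t) then 1 else 0)" by (rule sum.swap)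
    also have "\<dots> = (\<Sum>t<Suc k. \<Sum>q<n. if bad q then 1 else 0)"
      by (intro sum.cong refl sum_shift_per[where f = "\<lambda>q. if bad q then 1 else (0::nat)"]) (simp add: badper)
    also have "\<dots> = (k+1) * card {q. q < n \<and> bad q}" by (simp add: sum_ind_card)
    finally show ?thesis .
  qed
  have tot: "card {q. q < n \<and> turn q} + card {q. q < n \<and> \<not> turn q} = n"
  proof -
    have "card ({q. q < n \<and> turn q} \<union> {q. q < n \<and> \<not> turn q}) = card {q. q < n \<and> turn q} + card {q. q < n \<and> \<not> turn q}"
      by (rule card_Un_disjoint) auto
    moreover have "{q. q < n \<and> turn q} \<union> {q. q < n \<and> \<not> turn q} = {..<n}" by auto
    ultimately show ?thesis by simp
  qed
  have sumcls: "card {q. q < n \<and> turn q} + 2 * card {q. q < n \<and> bad q} \<le> 4 * k"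
  proof -
    have "(\<Sum>r<k. card {j. j < m \<and> turn (r + j*k)} + 2 * card {j. j < m \<and> bad (r + j*k)}) \<le> (\<Sum>r<k. 4)"
      by (rule sum_mono) (use clsb in auto)
    moreover have "(\<Sum>r<k. card {j. j < m \<and> turn (r + j*k)} + 2 * card {j. j < m \<and> bad (r + j*k)})
       = card {q. q < n \<and> turn q} + 2 * card {q. q < n \<and> bad q}"
      unfolding n_def by (simp add: sum.distrib sum_distrib_left[symmetric] card_group)
    ultimately show ?thesis by simp
  qed
  define T where "T = card {q. q < n \<and> turn q}"
  define B where "B = card {q. q < n \<and> bad q}"
  have i1: "int T + 2 * int B \<le> 4 * int k" using sumcls unfolding T_def B_def by linarith
  have i2: "int n \<le> int T + (int k + 1) * int B"
  proof -
    have "n \<le> T + (k+1) * B" using tot cnt unfolding T_def B_def by linarith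
    then have "int n \<le> int (T + (k+1) * B)" by linarith
    then show ?thesis by (simp add: algebra_simps)
  qed
  have i3: "int n = int m * int k" unfolding n_def by simp
  have i4: "2 * int k + 3 \<le> int m" using mk by linarith
  have hB: "int B \<le> 2 * int k" using i1 by linarith
  have hm: "(int k - 1) * int B \<le> (int k - 1) * (2 * int k)" using hB kn by (intro mult_left_mono) auto
  have hn: "(2 * int k + 3) * int k \<le> int m * int k" using i4 by (intro mult_right_mono) auto
  have e1: "(int k - 1) * int B = int k * int B - int B" by (simp add: algebra_simps)
  have e2: "(int k - 1) * (2 * int k) = 2 * (int k * int k) - 2 * int k" by (simp add: algebra_simps)
  have e3: "(2 * int k + 3) * int k = 2 * (int k * int k) + 3 * int k" by (simp add: algebra_simps)
  have e4: "(int k + 1) * int B = int k * int B + int B" by (simp add: algebra_simps)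
  show False using i1 i2 i3 hm hn e1 e2 e3 e4 kn by linarith
qed

lemma perm_msum_ge:
  fixes xs :: "nat list" and m k :: nat
  assumes xs: "xs \<in> permutations_of_set {1..m*k}" and om: "odd m" and ok: "odd k"
    and k3: "k \<ge> 3" and mk: "m \<ge> 2*k+3"
  shows "2 \<le> msum_perm xs k"
proof -
  obtain i0 where i0: "i0 < m*k" "k * (m*k+1) + 4 \<le> 2 * window_sum xs k i0"
    using main_exists[OF assms] by blast
  have len: "length xs = m*k"
    using permutations_of_setD[OF xs] distinct_card by fastforce
  define W where "W = {window_sum xs k i0 | i0. i0 < length xs}"
  have finW: "finite W" unfolding W_def by simp
  have inW: "window_sum xs k i0 \<in> W" unfolding W_def using i0 len by auto
  have "window_sum xs k i0 \<le> Max W" using finW inW by simp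
  then have "real (window_sum xs k i0) \<le> real (Max W)" by simp
  moreover have "real (k * (m*k+1) + 4) \<le> real (2 * window_sum xs k i0)" using i0(2) by linarith
  ultimately have "real k * (real (m*k) + 1) + 4 \<le> 2 * real (Max W)" by (simp add: algebra_simps)
  moreover have "msum_perm xs k = real (Max W) - real k * (real (m*k) + 1) / 2"
    unfolding msum_perm_def W_def len by simp
  ultimately show ?thesis by (simp add: field_simps)
qed


theorem lemma5p3:
  fixes m k :: nat
  assumes "odd m" and "odd k" and "k \<ge> 3" and "m \<ge> 2 * k + 3"
  shows "msum (m * k) k \<ge> 2"
proof -
  have ne: "[1..<m*k+1] \<in> permutations_of_set {1..m*k}"
  proof (rule permutations_of_setI)
    show "set [1..<m*k+1] = {1..m*k}" by (simp only: set_upt atLeastLessThanSuc_atLeastAtMost Suc_eq_plus1[symmetric])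
  qed simp
  have fin: "finite ((\<lambda>xs. msum_perm xs k) ` permutations_of_set {1..m*k})" by simp
  have nemp: "(\<lambda>xs. msum_perm xs k) ` permutations_of_set {1..m*k} \<noteq> {}" using ne by blast
  have "\<forall>a\<in>(\<lambda>xs. msum_perm xs k) ` permutations_of_set {1..m*k}. 2 \<le> a"
    using perm_msum_ge[OF _ assms] by blast
  then show ?thesis unfolding msum_def using Min_ge_iff[OF fin nemp] by blast
qed

end
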